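(* Let $b\ge2$, $n\ge1$ be integers and $\mathcal D=\{d,\dots,d+b-1\}$ a set of consecutive integers containing $0$. The state space of the $n$-carry process over $(-b,\mathcal D)$ is $\Omega_n(-b,\mathcal D)=\{s,s+1,\dots,t\}$ with $$s=-\lceil (n-1)(-l)\rceil=\lfloor (n-1)l\rfloor,\qquad t=\lceil (n-1)(l+1)\rceil,\qquad l=\frac{-d-b}{b+1}.$$ Consequently $\#\Omega_n(-b,\mathcal D)=n+1$ if $(n-1)l\notin\mathbb Z$ and $=n$ if $(n-1)l\in\mathbb Z$.
   Context: Carries process over the negative base $(-b,\mathcal D)$: let $\{X_{k,i}\}_{1\le k\le n,\ i\ge0}$ be independent random variables, each uniformly distributed on $\mathcal D$. Set $C_0=0$; for $i\ge0$ let $A_i$ be the unique element of $\mathcal D$ with $A_i\equiv C_i+X_{1,i}+\dots+X_{n,i}\pmod b$, and set $C_{i+1}=(C_i+X_{1,i}+\dots+X_{n,i}-A_i)/(-b)$. The state space $\Omega_n(-b,\mathcal D)$ is the set of integers $c$ with $\Pr(C_i=c)>0$ for some $i\ge0$. *)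

theory Defs
  imports "HOL-Probability.Probability_Mass_Function"
begin

fun digit_sum_dist :: "int set \<Rightarrow> nat \<Rightarrow> int pmf" where
  "digit_sum_dist D 0 = return_pmf 0"
| "digit_sum_dist D (Suc k) =
     bind_pmf (pmf_of_set D) (\<lambda>x. map_pmf (\<lambda>s. x + s) (digit_sum_dist D k))"

definition carry_digit :: "int \<Rightarrow> int set \<Rightarrow> int \<Rightarrow> int" where
  "carry_digit b D v = (THE a. a \<in> D \<and> a mod b = v mod b)"

definition carry_step :: "int \<Rightarrow> int set \<Rightarrow> nat \<Rightarrow> int \<Rightarrow> int pmf" where
  "carry_step b D n c =
     map_pmf (\<lambda>s. (c + s - carry_digit b D (c + s)) div (- b)) (digit_sum_dist D n)"

text \<open>Distribution of C_i (the X_{k,i} are independent across k and i, so C is a Markov chain).\<close>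
fun carry_dist :: "int \<Rightarrow> int set \<Rightarrow> nat \<Rightarrow> nat \<Rightarrow> int pmf" where
  "carry_dist b D n 0 = return_pmf 0"
| "carry_dist b D n (Suc i) = bind_pmf (carry_dist b D n i) (carry_step b D n)"

definition state_space :: "int \<Rightarrow> int set \<Rightarrow> nat \<Rightarrow> int set" where
  "state_space b D n = {c. \<exists>i. pmf (carry_dist b D n i) c > 0}"

end

theory Submission
  imports Defs
begin

lemma le_div_iff_int: assumes "(0::int) < b" shows "(k \<le> x div b) = (b*k \<le> x)"
proof -
  have x: "x = b * (x div b) + x mod b" by simp
  have r: "0 \<le> x mod b" "x mod b < b" using assms by auto
  show ?thesis
  proof
    assume "k \<le> x div b"
    then have "b * k \<le> b * (x div b)" using assms by (simp add: mult_left_mono)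
    then show "b*k \<le> x" using x r by linarith
  next
    assume h: "b*k \<le> x"
    show "k \<le> x div b"
    proof (rule ccontr)
      assume "\<not> k \<le> x div b"
      then have "x div b + 1 \<le> k" by simp
      then have "b * (x div b + 1) \<le> b * k" using assms by (simp add: mult_left_mono)
      then show False using x r h by (simp add: algebra_simps)
    qed
  qed
qed

lemma div_le_iff_int: assumes "(0::int) < b" shows "(x div b \<le> k) = (x < b*(k+1))"
  using le_div_iff_int[OF assms, of "k+1" x] by auto

lemma digit_sum_set:
  assumes "b \<ge> 1" "D = {d..d + b - 1}"
  shows "set_pmf (digit_sum_dist D k) = {int k * d .. int k * d + int k * (b - 1)}"
proof (induction k)
  case 0 then show ?case by simp
next
  case (Suc k)
  have fD: "finite D" "D \<noteq> {}" using assms by auto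
  show ?case
  proof (intro equalityI subsetI)
    fix y assume "y \<in> set_pmf (digit_sum_dist D (Suc k))"
    then obtain x where "x \<in> D" "y \<in> (\<lambda>s. x + s) ` set_pmf (digit_sum_dist D k)"
      using fD by auto
    then obtain z where "x \<in> D" "z \<in> {int k * d .. int k * d + int k * (b - 1)}" "y = x + z"
      using Suc by blast
    then show "y \<in> {int (Suc k) * d .. int (Suc k) * d + int (Suc k) * (b - 1)}"
      using assms by (auto simp: algebra_simps)
  next
    fix y assume y: "y \<in> {int (Suc k) * d .. int (Suc k) * d + int (Suc k) * (b - 1)}"
    define x where "x = max d (y - int k * d - int k * (b - 1))"
    have e1: "int (Suc k) * d = int k * d + d" "int (Suc k) * (b - 1) = int k * (b - 1) + (b - 1)"
      by (auto simp: algebra_simps)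
    have Q: "int k * (b - 1) \<ge> 0" using assms by simp
    have "x \<in> D" using y assms Q unfolding x_def e1 by (auto simp: max_def)
    moreover have "y - x \<in> {int k * d .. int k * d + int k * (b - 1)}"
      using y assms Q unfolding x_def e1 by (auto simp: max_def)
    ultimately show "y \<in> set_pmf (digit_sum_dist D (Suc k))"
      using fD Suc by (auto intro!: bexI[of _ x] image_eqI[of _ _ "y - x"])
  qed
qed


lemma carry_digit_eq:
  assumes "(b::int) > 0" "D = {d..d + b - 1}"
  shows "carry_digit b D v = d + (v - d) mod b"
  unfolding carry_digit_def
proof (rule the_equality)
  have "(d + (v - d) mod b) mod b = v mod b"
    by (metis add.commute diff_add_cancel mod_add_right_eq)
  then show "d + (v - d) mod b \<in> D \<and> (d + (v - d) mod b) mod b = v mod b"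
    using assms pos_mod_bound[of b "v-d"] pos_mod_sign[of b "v-d"] by auto
next
  fix a assume a: "a \<in> D \<and> a mod b = v mod b"
  have "(a - d) mod b = (v - d) mod b" using a by (metis mod_diff_cong)
  moreover have "(a - d) mod b = a - d" using a assms by (intro mod_pos_pos_trivial) auto
  ultimately show "a = d + (v - d) mod b" by simp
qed

lemma step_val:
  assumes "(b::int) > 0"
  shows "(w - (d + (w - d) mod b)) div (- b) = - ((w - d) div b)"
proof -
  have "w - (d + (w - d) mod b) = b * ((w - d) div b)"
    using minus_mod_eq_mult_div[of "w-d" b] by simp
  moreover have "(- (b * ((w - d) div b))) div b = - ((w - d) div b)"
    using assms by (metis minus_mult_right nonzero_mult_div_cancel_left less_irrefl)
  ultimately show ?thesis using assms by (simp add: div_minus_right)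
qed

lemma img_div:
  assumes "(b::int) > 0" "L \<le> U"
  shows "(\<lambda>x. - ((x + C) div b)) ` {L..U} = {- ((U + C) div b) .. - ((L + C) div b)}"
proof (intro equalityI subsetI)
  fix y assume "y \<in> (\<lambda>x. - ((x + C) div b)) ` {L..U}"
  then obtain x where "x \<in> {L..U}" "y = - ((x + C) div b)" by auto
  then show "y \<in> {- ((U + C) div b) .. - ((L + C) div b)}"
    using assms by (auto intro: zdiv_mono1)
next
  fix y assume y: "y \<in> {- ((U + C) div b) .. - ((L + C) div b)}"
  define x where "x = max L (b * (-y) - C)"
  have h1: "(L + C) div b \<le> -y" "-y \<le> (U + C) div b" using y by auto
  have h2: "b * (-y) \<le> U + C" using h1(2) le_div_iff_int[OF assms(1)] by blast
  have h3: "L + C < b * (-y + 1)" using h1(1) div_le_iff_int[OF assms(1)] by blast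
  have "(x + C) div b \<le> -y" using h3 unfolding x_def div_le_iff_int[OF assms(1)]
    using assms(1) by (auto simp: max_def algebra_simps)
  moreover have "-y \<le> (x + C) div b" unfolding le_div_iff_int[OF assms(1)] x_def
    by (auto simp: max_def)
  moreover have "x \<in> {L..U}" using h2 assms unfolding x_def by auto
  ultimately show "y \<in> (\<lambda>x. - ((x + C) div b)) ` {L..U}"
    by (intro image_eqI[of _ _ x]) auto
qed

lemma carry_step_set:
  assumes "b \<ge> 2" "D = {d..d + b - 1}" "n = Suc m"
  shows "set_pmf (carry_step b D n c) =
    {- ((c + int m * d + int n * (b - 1)) div b) .. - ((c + int m * d) div b)}"
proof -
  have b0: "b > 0" using assms by simp
  have "set_pmf (carry_step b D n c) =
      (\<lambda>S. (c + S - carry_digit b D (c + S)) div (- b)) ` {int n * d .. int n * d + int n * (b - 1)}"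
    unfolding carry_step_def using digit_sum_set[of b D d n] assms by simp
  also have "\<dots> = (\<lambda>x. - ((x + (c - d)) div b)) ` {int n * d .. int n * d + int n * (b - 1)}"
    using carry_digit_eq[OF b0 assms(2)] step_val[OF b0] by (simp add: algebra_simps)
  also have "\<dots> = {- ((int n * d + int n * (b - 1) + (c - d)) div b) .. - ((int n * d + (c - d)) div b)}"
    using assms by (intro img_div) auto
  also have "\<dots> = {- ((c + int m * d + int n * (b - 1)) div b) .. - ((c + int m * d) div b)}"
    using assms by (simp add: algebra_simps)
  finally show ?thesis .
qed

lemma union_int:
  assumes "(b::int) > 0" "a \<le> c" "b - 1 + W \<ge> 0" "W \<ge> 0"
  shows "(\<Union>x\<in>{a..c}. {- ((x + P + W) div b) .. - ((x + P) div b)}) = {- ((c + P + W) div b) .. - ((a + P) div b)}"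
proof (intro equalityI subsetI)
  fix y assume "y \<in> (\<Union>x\<in>{a..c}. {- ((x + P + W) div b) .. - ((x + P) div b)})"
  then obtain x where x: "x \<in> {a..c}" "y \<in> {- ((x + P + W) div b) .. - ((x + P) div b)}" by auto
  have "(x + P + W) div b \<le> (c + P + W) div b" "(a + P) div b \<le> (x + P) div b"
    using x(1) assms(1) by (auto intro!: zdiv_mono1)
  then show "y \<in> {- ((c + P + W) div b) .. - ((a + P) div b)}" using x(2) by auto
next
  fix y assume y: "y \<in> {- ((c + P + W) div b) .. - ((a + P) div b)}"
  define x where "x = min c (b * (1 - y) - P - 1)"
  have h1: "(a + P) div b \<le> -y" "-y \<le> (c + P + W) div b" using y by auto
  have h3: "a + P < b * (-y + 1)" using h1(1) div_le_iff_int[OF assms(1)] by blast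
  have h2: "b * (-y) \<le> c + P + W" using h1(2) le_div_iff_int[OF assms(1)] by blast
  have "x \<in> {a..c}" using h3 assms(2) unfolding x_def by (auto simp: algebra_simps)
  moreover have "(x + P) div b \<le> -y" unfolding div_le_iff_int[OF assms(1)] x_def
    by (auto simp: min_def algebra_simps)
  moreover have "-y \<le> (x + P + W) div b" unfolding le_div_iff_int[OF assms(1)] x_def
    using h2 assms by (auto simp: min_def algebra_simps)
  ultimately show "y \<in> (\<Union>x\<in>{a..c}. {- ((x + P + W) div b) .. - ((x + P) div b)})"
    by (intro UN_I[of x]) auto
qed


fun bnds :: "int \<Rightarrow> int \<Rightarrow> nat \<Rightarrow> nat \<Rightarrow> int \<times> int" where
  "bnds b d m 0 = (0, 0)"
| "bnds b d m (Suc i) = (- ((snd (bnds b d m i) + int m * d + int (Suc m) * (b - 1)) div b),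
                         - ((fst (bnds b d m i) + int m * d) div b))"

lemma bnds_mono:
  assumes "b \<ge> 2" "- (b - 1) \<le> d" "d \<le> 0"
  shows "fst (bnds b d m (Suc i)) \<le> fst (bnds b d m i) \<and> snd (bnds b d m i) \<le> snd (bnds b d m (Suc i))"
proof (induction i)
  case 0
  have "int m * (- (b - 1)) \<le> int m * d" using assms by (intro mult_left_mono) auto
  then have "0 \<le> int m * d + int (Suc m) * (b - 1)" using assms by (simp add: algebra_simps)
  then have "0 \<le> (int m * d + int (Suc m) * (b - 1)) div b" using assms le_div_iff_int[of b 0] by simp
  moreover have "int m * d \<le> 0" using assms by (simp add: mult_nonneg_nonpos)
  then have "(int m * d) div b \<le> 0" using assms div_le_iff_int[of b "int m * d" 0] by simp
  ultimately show ?case by simp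
next
  case (Suc i)
  then show ?case using assms by (auto intro!: zdiv_mono1 simp del: of_nat_Suc)
qed

lemma bnds_sign:
  assumes "b \<ge> 2" "- (b - 1) \<le> d" "d \<le> 0"
  shows "fst (bnds b d m i) \<le> 0 \<and> 0 \<le> snd (bnds b d m i)"
proof (induction i)
  case 0 then show ?case by simp
next
  case (Suc i) then show ?case using bnds_mono[OF assms, of m i] by linarith
qed

lemma carry_set:
  assumes "b \<ge> 2" "D = {d..d + b - 1}" "0 \<in> D" "n = Suc m"
  shows "set_pmf (carry_dist b D n i) = {fst (bnds b d m i) .. snd (bnds b d m i)}"
proof (induction i)
  case 0 then show ?case by simp
next
  case (Suc i)
  have d: "- (b - 1) \<le> d" "d \<le> 0" using assms by auto
  have le: "fst (bnds b d m i) \<le> snd (bnds b d m i)" using bnds_sign[OF assms(1) d, of m i] by linarith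
  have "set_pmf (carry_dist b D n (Suc i)) = (\<Union>c\<in>{fst (bnds b d m i) .. snd (bnds b d m i)}.
      {- ((c + int m * d + int n * (b - 1)) div b) .. - ((c + int m * d) div b)})"
    using Suc carry_step_set[OF assms(1,2,4)] by simp
  also have "\<dots> = {- ((snd (bnds b d m i) + int m * d + int n * (b - 1)) div b) .. - ((fst (bnds b d m i) + int m * d) div b)}"
    using assms le by (intro union_int) auto
  finally show ?case using assms(4) by simp
qed

lemma step_arith:
  fixes b d s r e t A B :: int and m :: nat
  assumes b2: "b \<ge> 2" and K: "- (int m * (d + b)) = (b + 1) * s + r" and r: "0 \<le> r" "r \<le> b"
    and e: "e = (if r = 0 then 0 else 1)" and t: "t = s + e + int m" and A: "s \<le> A" and B: "B \<le> t"
  shows "s \<le> - ((B + int m * d + int (Suc m) * (b - 1)) div b)"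
    "- ((A + int m * d) div b) \<le> t"
    "b * (- ((B + int m * d + int (Suc m) * (b - 1)) div b) - s) \<le> r + (t - B) - e"
    "b * (t - - ((A + int m * d) div b)) \<le> b * e + (A - s) - r"
proof -
  have b0: "b > 0" using b2 by simp
  have md: "int m * d = - (b * s) - s - r - int m * b" using K by (simp add: algebra_simps)
  have W: "int (Suc m) * (b - 1) = int m * b - int m + b - 1" by (simp add: algebra_simps)
  have be: "b * e = (if r = 0 then 0 else b)" using e by simp
  have er: "e \<le> r" "r \<le> b * e" using e r by auto
  define X where "X = B + int m * d + int (Suc m) * (b - 1)"
  define Q1 where "Q1 = X div b"
  have q1: "b * Q1 + X mod b = X" unfolding Q1_def by simp
  have m1: "0 \<le> X mod b" "X mod b < b" using b0 by auto
  have "Q1 \<le> - s" unfolding Q1_def div_le_iff_int[OF b0]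
    unfolding X_def using md W t B er by (simp add: algebra_simps)
  then show "s \<le> - ((B + int m * d + int (Suc m) * (b - 1)) div b)" unfolding Q1_def X_def by simp
  have "b * (- Q1 - s) = - (b * Q1) - b * s" by (simp add: algebra_simps)
  also have "\<dots> \<le> r + (t - B) - e" using q1 m1 md W t unfolding X_def by linarith
  finally show "b * (- ((B + int m * d + int (Suc m) * (b - 1)) div b) - s) \<le> r + (t - B) - e"
    unfolding Q1_def X_def .
  define Y where "Y = A + int m * d"
  define Q2 where "Q2 = Y div b"
  have q2: "b * Q2 + Y mod b = Y" unfolding Q2_def by simp
  have m2: "0 \<le> Y mod b" using b0 by auto
  have bt: "b * t = b * s + b * e + int m * b" using t by (simp add: algebra_simps)
  have "- t \<le> Q2" unfolding Q2_def le_div_iff_int[OF b0] Y_def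
    using md bt A er by (simp add: algebra_simps)
  then show "- ((A + int m * d) div b) \<le> t" unfolding Q2_def Y_def by simp
  have "b * (t - - Q2) = b * t + b * Q2" by (simp add: algebra_simps)
  also have "\<dots> \<le> b * e + (A - s) - r" using bt q2 m2 md unfolding Y_def by linarith
  finally show "b * (t - - ((A + int m * d) div b)) \<le> b * e + (A - s) - r" unfolding Q2_def Y_def .
qed

lemma core:
  fixes b r e \<alpha> \<beta> \<alpha>' \<beta>' :: int
  assumes "b \<ge> 2" "0 \<le> r" "r \<le> b" "e = (if r = 0 then 0 else 1)" "\<alpha> \<ge> 0" "\<beta> \<ge> 0"
    "b * \<alpha>' \<le> r + \<beta> - e" "b * \<beta>' \<le> b * e + \<alpha> - r" "\<alpha>' \<le> \<alpha>" "\<beta>' \<le> \<beta>" "\<alpha> + \<beta> > 0"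
  shows "\<alpha>' + \<beta>' < \<alpha> + \<beta>"
proof (rule ccontr)
  assume "\<not> ?thesis"
  then have eq: "\<alpha>' = \<alpha>" "\<beta>' = \<beta>" using assms by auto
  have "b * (\<alpha> + \<beta>) \<le> (\<alpha> + \<beta>) + (b - 1) * e" using assms eq by (simp add: algebra_simps)
  then have "(b - 1) * (\<alpha> + \<beta>) \<le> (b - 1) * e" by (simp add: algebra_simps)
  then have "\<alpha> + \<beta> \<le> e" using assms(1) by (simp add: mult_le_cancel_left)
  then have "e = 1" "\<alpha> + \<beta> = 1" using assms by (auto split: if_splits)
  then have "(\<alpha> = 1 \<and> \<beta> = 0) \<or> (\<alpha> = 0 \<and> \<beta> = 1)" using assms by auto
  then show False using assms eq \<open>e = 1\<close> by auto
qed


theorem lemma6: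
  fixes b d :: int and n :: nat
  assumes "b \<ge> 2" and "n \<ge> 1"
    and "D = {d..d + b - 1}" and "0 \<in> D"
    and "l = real_of_int (- d - b) / real_of_int (b + 1)"
    and "s = - \<lceil>real (n - 1) * (- l)\<rceil>"
    and "t = \<lceil>real (n - 1) * (l + 1)\<rceil>"
  shows "s = \<lfloor>real (n - 1) * l\<rfloor>
     \<and> state_space b D n = {s..t}
     \<and> card (state_space b D n) = (if real (n - 1) * l \<in> \<int> then n else n + 1)"
proof -
  obtain m where nm: "n = Suc m" using assms(2) by (cases n) auto
  have b2: "b \<ge> 2" using assms by simp
  have dd: "- (b - 1) \<le> d" "d \<le> 0" using assms(3,4) by auto
  define K where "K = - (int m * (d + b))"
  define q where "q = b + 1"
  define s0 where "s0 = K div q"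
  define r where "r = K mod q"
  define e :: int where "e = (if r = 0 then 0 else 1)"
  have q0: "q > 0" "q \<noteq> 0" using b2 unfolding q_def by auto
  have Kq: "K = q * s0 + r" unfolding s0_def r_def by simp
  have r: "0 \<le> r" "r \<le> b" using q0 pos_mod_bound[of q K] pos_mod_sign[of q K] unfolding r_def q_def by auto
  have K2: "- (int m * (d + b)) = (b + 1) * s0 + r" using Kq unfolding K_def q_def by simp
  have rl: "real (n - 1) * l = real_of_int K / real_of_int q"
    unfolding K_def q_def using assms(5) nm by (simp add: algebra_simps)
  have rl2: "real (n - 1) * (- l) = real_of_int (- K) / real_of_int q"
    using rl by simp
  have fl: "\<lfloor>real (n - 1) * l\<rfloor> = s0" unfolding rl s0_def by (rule floor_divide_of_int_eq)
  have ss: "s = s0"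
  proof -
    have "s = - \<lceil>real_of_int (- K) / real_of_int q\<rceil>" using assms(6) rl2 by simp
    also have "\<dots> = \<lfloor>real_of_int K / real_of_int q\<rfloor>" unfolding ceiling_def by simp
    also have "\<dots> = s0" unfolding s0_def by (rule floor_divide_of_int_eq)
    finally show ?thesis .
  qed
  have ce: "\<lceil>real_of_int K / real_of_int q\<rceil> = s0 + e"
  proof -
    have "\<lceil>real_of_int K / real_of_int q\<rceil> = - \<lfloor>real_of_int (- K) / real_of_int q\<rfloor>"
      by (simp add: ceiling_def)
    also have "\<dots> = - ((- K) div q)" by (simp only: floor_divide_of_int_eq)
    also have "\<dots> = s0 + e" using zdiv_zminus1_eq_if[OF q0(2), of K] unfolding s0_def e_def r_def by simp
    finally show ?thesis .
  qed
  have tt: "t = s0 + e + int m"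
  proof -
    have "real (n - 1) * (l + 1) = real_of_int K / real_of_int q + of_int (int m)"
      using rl nm by (simp add: algebra_simps)
    moreover have "\<lceil>real_of_int K / real_of_int q + of_int (int m)\<rceil> = \<lceil>real_of_int K / real_of_int q\<rceil> + int m"
      by (rule ceiling_add_of_int)
    ultimately show ?thesis using assms(7) ce by simp
  qed
  define A where "A i = fst (bnds b d m i)" for i
  define B where "B i = snd (bnds b d m i)" for i
  have AS: "A (Suc i) = - ((B i + int m * d + int (Suc m) * (b - 1)) div b)" for i
    unfolding A_def B_def by simp
  have BS: "B (Suc i) = - ((A i + int m * d) div b)" for i
    unfolding A_def B_def by simp
  have e_def': "e = (if r = 0 then 0 else 1)" by (rule e_def)
  have bnd: "s0 \<le> A i \<and> B i \<le> t" for i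
  proof (induction i)
    case 0
    have "K \<le> 0" unfolding K_def using dd b2 by (simp add: mult_nonneg_nonneg)
    then have "s0 \<le> 0" unfolding s0_def using q0 div_le_iff_int[of q K 0] by simp
    moreover have "0 \<le> t" using tt r e_def
    proof -
      have "int m * d \<le> int m * 1" using dd by (intro mult_left_mono) auto
      then have "- (int m * q) \<le> K" unfolding K_def q_def
        by (simp add: algebra_simps)
      then have "- int m \<le> s0" unfolding s0_def using q0 le_div_iff_int[of q "- int m" K]
        by (simp add: algebra_simps)
      then show ?thesis using tt e_def by auto
    qed
    ultimately show ?case unfolding A_def B_def by simp
  next
    case (Suc i)
    then show ?case unfolding AS BS
      using step_arith(1,2)[OF b2 K2 r e_def' tt, of "A i" "B i"] by auto
  qed
  define \<Phi> where "\<Phi> i = (A i - s0) + (t - B i)" for i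
  have dec: "\<Phi> (Suc i) < \<Phi> i" if "\<Phi> i > 0" for i
  proof -
    have mo: "A (Suc i) \<le> A i" "B i \<le> B (Suc i)"
      using bnds_mono[OF b2 dd, of m i] unfolding A_def B_def by auto
    have h3: "b * (A (Suc i) - s0) \<le> r + (t - B i) - e"
      using step_arith(3)[OF b2 K2 r e_def' tt, of "A i" "B i"] bnd[of i] unfolding AS by auto
    have h4: "b * (t - B (Suc i)) \<le> b * e + (A i - s0) - r"
      using step_arith(4)[OF b2 K2 r e_def' tt, of "A i" "B i"] bnd[of i] unfolding BS by auto
    have "(A (Suc i) - s0) + (t - B (Suc i)) < (A i - s0) + (t - B i)"
      by (rule core[OF b2 r e_def' _ _ h3 h4]) (use bnd[of i] mo that in \<open>auto simp: \<Phi>_def\<close>)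
    then show ?thesis unfolding \<Phi>_def .
  qed
  have Phi_nonneg: "\<Phi> i \<ge> 0" for i using bnd[of i] unfolding \<Phi>_def by auto
  have Phi_le: "\<Phi> i \<le> max 0 (\<Phi> 0 - int i)" for i
  proof (induction i)
    case 0 then show ?case by simp
  next
    case (Suc i)
    show ?case
    proof (cases "\<Phi> i > 0")
      case True then show ?thesis using dec[OF True] Suc by auto
    next
      case False
      then have "\<Phi> i = 0" using Phi_nonneg[of i] by simp
      moreover have "\<Phi> (Suc i) \<le> \<Phi> i"
        using bnds_mono[OF b2 dd, of m i] unfolding \<Phi>_def A_def B_def by auto
      ultimately show ?thesis using Phi_nonneg[of "Suc i"] by simp
    qed
  qed
  define N where "N = nat (\<Phi> 0)"
  have "\<Phi> N = 0" using Phi_le[of N] Phi_nonneg[of N] Phi_nonneg[of 0] unfolding N_def by simp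
  then have AN: "A N = s0" "B N = t" using bnd[of N] unfolding \<Phi>_def by auto
  have SS: "state_space b D n = (\<Union>i. {A i .. B i})"
    unfolding state_space_def pmf_positive_iff carry_set[OF b2 assms(3,4) nm] A_def B_def by auto
  also have "\<dots> = {s0..t}"
  proof
    show "(\<Union>i. {A i .. B i}) \<subseteq> {s0..t}" using bnd by (meson UN_least atLeastatMost_subset_iff)
    show "{s0..t} \<subseteq> (\<Union>i. {A i .. B i})" using AN by blast
  qed
  finally have SSt: "state_space b D n = {s0..t}" .
  have ints: "(real (n - 1) * l \<in> \<int>) = (r = 0)"
  proof
    assume "real (n - 1) * l \<in> \<int>"
    then obtain z where z: "real_of_int K / real_of_int q = of_int z" unfolding rl by (auto elim: Ints_cases)
    then have "real_of_int K = real_of_int q * of_int z" using q0 by (simp add: field_simps)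
    then have "K = q * z" by (metis of_int_eq_iff of_int_mult)
    then show "r = 0" unfolding r_def by simp
  next
    assume "r = 0"
    then have "real_of_int K / real_of_int q = of_int s0" using Kq q0 by simp
    then show "real (n - 1) * l \<in> \<int>" unfolding rl by simp
  qed
  have "card (state_space b D n) = nat (e + int m + 1)" unfolding SSt tt by simp
  also have "\<dots> = (if real (n - 1) * l \<in> \<int> then n else n + 1)"
    by (subst ints) (auto simp: e_def nm)
  finally show ?thesis using SSt ss fl by simp
qed

end
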